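(* Let $\mathcal{M}$ be the BST merge of a BST mergesort algorithm and let $\pi$ be a permutation of $\{1,\dots,n\}$, plotted as the points $(i,\pi_i)$. The arboral mergesort on $\pi$ returns an arborally satisfied set (containing all points $(i,\pi_i)$).
   Context: Points: horizontal axis is time (input position), vertical axis is key. A set $P$ of points is arborally satisfied if for every two points $x,y\in P$ not on a common horizontal or vertical line, the rectangle with corners $x,y$ contains a point of $P$ other than $x,y$. A top tree of a binary tree is a connected set of nodes containing the root. A BST merge $\mathcal{M}$ takes BSTs $T_A,T_B$ with disjoint keys and, for some top trees $\tau_a$ of $T_A$ and $\tau_b$ of $T_B$, returns a BST $T$ on the union of keys with a top tree $\tau=\tau_a\cup\tau_b$, the subtrees of $T$ hanging off $\tau$ being unchanged subtrees of $T_A$ or $T_B$, and $\tau$ containing the block boundaries (in the sorted merged order, blocks are maximal runs of keys from one input; boundaries are their first and last keys); the keys accessed by the merge are those of $\tau$. A BST mergesort recursively splits the input sequence into two contiguous nonempty parts, sorts each (singletons being one-node BSTs), and BST-merges the results. Arboral mergesort: it follows the same recursion as the BST mergesort on $\pi$; a part of size one is the single point $(i,\pi_i)$. To combine the point sets $A$ (left part) and $B$ (right part): if one is empty return the other; otherwise let $C$ be $A$ and $B$ placed side by side on the time axis, let $S$ be the set of keys accessed by $\mathcal{M}$ when merging the BSTs produced by the mergesort for these two parts, and add the points $(c,s)$ for all $s\in S$ and for each of three columns $c$: the first column of $C$, the rightmost column of $A$, and the last column of $C$. Return the resulting set. *)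

theory Defs
  imports Main "HOL-Library.Tree"
begin

(* Points: (time, key). *)
definition arborally_satisfied :: "(nat \<times> nat) set \<Rightarrow> bool" where
  "arborally_satisfied P \<longleftrightarrow>
     (\<forall>x\<in>P. \<forall>y\<in>P. fst x \<noteq> fst y \<and> snd x \<noteq> snd y \<longrightarrow>
        (\<exists>z\<in>P. z \<noteq> x \<and> z \<noteq> y \<and>
           min (fst x) (fst y) \<le> fst z \<and> fst z \<le> max (fst x) (fst y) \<and>
           min (snd x) (snd y) \<le> snd z \<and> snd z \<le> max (snd x) (snd y)))"

fun top_part :: "'a tree \<Rightarrow> 'a tree \<Rightarrow> bool" where
  "top_part Leaf t = True"
| "top_part (Node l a r) Leaf = False"
| "top_part (Node l a r) (Node l' a' r') = (a = a' \<and> top_part l l' \<and> top_part r r')"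

definition top_tree :: "'a tree \<Rightarrow> 'a tree \<Rightarrow> bool" where
  "top_tree tau T \<longleftrightarrow> top_part tau T \<and> tau \<noteq> Leaf"

fun hanging :: "'a tree \<Rightarrow> 'a tree \<Rightarrow> 'a tree set" where
  "hanging Leaf t = {t}"
| "hanging (Node l a r) Leaf = {}"
| "hanging (Node l a r) (Node l' a' r') = hanging l l' \<union> hanging r r'"

(* x is a block boundary (first or last key of a maximal run of keys from one input)
   in the sorted order of A \<union> B, A and B disjoint *)
definition block_boundary :: "nat set \<Rightarrow> nat set \<Rightarrow> nat \<Rightarrow> bool" where
  "block_boundary A B x \<longleftrightarrow> x \<in> A \<union> B \<and>
     ((\<forall>y\<in>A \<union> B. y < x \<and> \<not>(\<exists>z\<in>A \<union> B. y < z \<and> z < x) \<longrightarrow> (y \<in> A \<longleftrightarrow> x \<notin> A))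
    \<or> (\<forall>y\<in>A \<union> B. x < y \<and> \<not>(\<exists>z\<in>A \<union> B. x < z \<and> z < y) \<longrightarrow> (y \<in> A \<longleftrightarrow> x \<notin> A)))"

(* M TA TB = (T, tau): the merged BST T and its top tree tau (accessed keys = keys of tau) *)
definition is_bst_merge :: "(nat tree \<Rightarrow> nat tree \<Rightarrow> nat tree \<times> nat tree) \<Rightarrow> bool" where
  "is_bst_merge M \<longleftrightarrow>
    (\<forall>TA TB. bst TA \<and> bst TB \<and> TA \<noteq> Leaf \<and> TB \<noteq> Leaf \<and> set_tree TA \<inter> set_tree TB = {} \<longrightarrow>
      (let T = fst (M TA TB); tau = snd (M TA TB) in
         bst T \<and> set_tree T = set_tree TA \<union> set_tree TB \<and> top_tree tau T \<and>
         (\<exists>ta tb. top_tree ta TA \<and> top_tree tb TB \<and>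
            set_tree tau = set_tree ta \<union> set_tree tb \<and>
            (\<forall>t\<in>hanging tau T. t \<noteq> Leaf \<longrightarrow> t \<in> hanging ta TA \<union> hanging tb TB)) \<and>
         {x. block_boundary (set_tree TA) (set_tree TB) x} \<subseteq> set_tree tau))"

definition split_pt :: "(nat list \<Rightarrow> nat) \<Rightarrow> nat list \<Rightarrow> nat" where
  "split_pt sp xs = max 1 (min (length xs - 1) (sp xs))"

lemma split_pt_bounds: "2 \<le> length xs \<Longrightarrow> 0 < split_pt sp xs \<and> split_pt sp xs < length xs"
  unfolding split_pt_def by auto

function bst_msort :: "(nat list \<Rightarrow> nat) \<Rightarrow> (nat tree \<Rightarrow> nat tree \<Rightarrow> nat tree \<times> nat tree)
    \<Rightarrow> nat list \<Rightarrow> nat tree" where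
  "bst_msort sp M xs =
     (if length xs = 0 then Leaf
      else if length xs = 1 then Node Leaf (hd xs) Leaf
      else fst (M (bst_msort sp M (take (split_pt sp xs) xs))
                  (bst_msort sp M (drop (split_pt sp xs) xs))))"
  by pat_completeness auto
termination
  by (relation "measure (\<lambda>(_, _, xs). length xs)")
     (auto simp: min_def max_def split_pt_def le_Suc_eq)

(* arboral mergesort on the subsequence xs occupying columns t0, t0+1, ... *)
function arb_msort :: "(nat list \<Rightarrow> nat) \<Rightarrow> (nat tree \<Rightarrow> nat tree \<Rightarrow> nat tree \<times> nat tree)
    \<Rightarrow> nat \<Rightarrow> nat list \<Rightarrow> (nat \<times> nat) set" where
  "arb_msort sp M t0 xs =
     (if length xs = 0 then {}
      else if length xs = 1 then {(t0, hd xs)}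
      else (let k = split_pt sp xs;
                A = arb_msort sp M t0 (take k xs);
                B = arb_msort sp M (t0 + k) (drop k xs);
                S = set_tree (snd (M (bst_msort sp M (take k xs)) (bst_msort sp M (drop k xs))))
            in if A = {} then B else if B = {} then A
               else A \<union> B \<union> {(c, s). c \<in> {t0, t0 + k - 1, t0 + length xs - 1} \<and> s \<in> S}))"
  by pat_completeness auto
termination
  by (relation "measure (\<lambda>(_, _, _, xs). length xs)")
     (auto simp: min_def max_def split_pt_def le_Suc_eq)

end

theory Submission
  imports Defs
begin


fun anc :: "'a tree \<Rightarrow> 'a \<Rightarrow> 'a \<Rightarrow> bool" where
  "anc Leaf s a = False"
| "anc (Node l v r) s a = ((v = s \<and> a \<in> set_tree (Node l v r)) \<or> anc l s a \<or> anc r s a)"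

lemma anc_set: "anc T s a \<Longrightarrow> a \<in> set_tree T \<and> s \<in> set_tree T"
  by (induction T) auto

lemma lca: "bst T \<Longrightarrow> a \<in> set_tree T \<Longrightarrow> s \<in> set_tree T \<Longrightarrow>
  \<exists>w. anc T w a \<and> anc T w s \<and> min a s \<le> w \<and> w \<le> (max a s::'a::linorder)"
proof (induction T)
  case Leaf then show ?case by simp
next
  case (Node l v r)
  show ?case
  proof (cases "a < v \<and> s < v")
    case True
    then have "a \<in> set_tree l" "s \<in> set_tree l" using Node.prems by auto
    then show ?thesis using Node.IH(1) Node.prems(1) by fastforce
  next
    case f1: False
    show ?thesis
    proof (cases "v < a \<and> v < s")
      case True
      then have "a \<in> set_tree r" "s \<in> set_tree r" using Node.prems by auto
      then show ?thesis using Node.IH(2) Node.prems(1) by fastforce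
    next
      case False
      then have "min a s \<le> v \<and> v \<le> max a s" using f1 by auto
      then show ?thesis using Node.prems by (intro exI[of _ v]) auto
    qed
  qed
qed

lemma top_set: "top_part \<rho> T \<Longrightarrow> set_tree \<rho> \<subseteq> set_tree T"
  by (induction \<rho> T rule: top_part.induct) auto

lemma top_closed: "top_part \<rho> T \<Longrightarrow> bst T \<Longrightarrow> anc T w s \<Longrightarrow> s \<in> set_tree \<rho> \<Longrightarrow> w \<in> set_tree \<rho>"
proof (induction \<rho> T rule: top_part.induct)
  case (1 t) then show ?case by simp
next
  case (2 l a r) then show ?case by simp
next
  case (3 l a r l' a' r')
  have sl: "set_tree l \<subseteq> set_tree l'" "set_tree r \<subseteq> set_tree r'" using 3 top_set by auto
  have "w = a' \<or> anc l' w s \<or> anc r' w s" using "3.prems" by auto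
  then consider "w = a'" | "anc l' w s" | "anc r' w s" by blast
  then show ?case
  proof cases
    case 1 then show ?thesis using 3 by simp
  next
    case 2
    then have "s \<in> set_tree l'" using anc_set[OF 2] by blast
    then have "s \<in> set_tree l" using "3.prems" sl 3 by fastforce
    then show ?thesis using 3 2 by auto
  next
    case 4: 3
    then have "s \<in> set_tree r'" using anc_set[OF 4] by blast
    then have "s \<in> set_tree r" using "3.prems" sl 3 by fastforce
    then show ?thesis using 3 4 by auto
  qed
qed

lemma hang_anc: "top_part \<sigma> T \<Longrightarrow> s \<notin> set_tree \<sigma> \<Longrightarrow> anc T s a \<Longrightarrow> \<exists>H\<in>hanging \<sigma> T. anc H s a"
  by (induction \<sigma> T rule: top_part.induct) auto

lemma hang_sub: "top_part \<rho> T \<Longrightarrow> H \<in> hanging \<rho> T \<Longrightarrow> anc H s a \<Longrightarrow> anc T s a"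
  by (induction \<rho> T rule: top_part.induct) auto

lemma bb_sym: "KA \<inter> KB = {} \<Longrightarrow> block_boundary KB KA x = block_boundary KA KB x"
  unfolding block_boundary_def by blast

lemma bb_lt:
  assumes "finite (KA \<union> KB)" "KA \<inter> KB = {}" "a \<in> KA" "s \<in> KB" "a < s"
  shows "\<exists>u\<in>KA. block_boundary KA KB u \<and> a \<le> u \<and> u < s"
proof -
  define U where "U = {u\<in>KA. a \<le> u \<and> u < s}"
  have fU: "finite U" using assms unfolding U_def by (auto intro: finite_subset)
  have "a \<in> U" using assms U_def by auto
  define u where "u = Max U"
  have uU: "u \<in> U" using fU \<open>a\<in>U\<close> u_def Max_in by blast
  have umax: "\<forall>w\<in>U. w \<le> u" using fU u_def by simp
  define V where "V = {w\<in>KA \<union> KB. u < w}"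
  have "s \<in> V" using uU assms V_def U_def by auto
  have fV: "finite V" using assms V_def by (auto intro: finite_subset)
  define v where "v = Min V"
  have vV: "v \<in> V" using fV \<open>s\<in>V\<close> v_def Min_in by blast
  have vmin: "\<forall>w\<in>V. v \<le> w" using fV v_def by simp
  have "v \<le> s" using vmin \<open>s\<in>V\<close> by auto
  have vnA: "v \<notin> KA"
  proof
    assume "v \<in> KA"
    show False
    proof (cases "v < s")
      case True
      then have "v \<in> U" using \<open>v \<in> KA\<close> uU vV U_def V_def by auto
      then show False using umax vV V_def by fastforce
    next
      case False
      then show False using \<open>v \<le> s\<close> \<open>v \<in> KA\<close> assms by auto
    qed
  qed
  have "block_boundary KA KB u"
    unfolding block_boundary_def
  proof (intro conjI disjI2 ballI impI)
    show "u \<in> KA \<union> KB" using uU U_def by auto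
    fix y assume y: "y \<in> KA \<union> KB" "u < y \<and> \<not> (\<exists>z\<in>KA \<union> KB. u < z \<and> z < y)"
    then have "y \<in> V" using V_def by auto
    then have "v \<le> y" using vmin by auto
    moreover have "\<not> v < y" using y vV V_def by auto
    ultimately have "y = v" by auto
    then show "(y \<in> KA) = (u \<notin> KA)" using vnA uU U_def by auto
  qed
  then show ?thesis using uU U_def by auto
qed

lemma bb_gt:
  assumes "finite (KA \<union> KB)" "KA \<inter> KB = {}" "a \<in> KA" "s \<in> KB" "s < a"
  shows "\<exists>u\<in>KA. block_boundary KA KB u \<and> s < u \<and> u \<le> a"
proof -
  define U where "U = {u\<in>KA. s < u \<and> u \<le> a}"
  have fU: "finite U" using assms unfolding U_def by (auto intro: finite_subset)
  have "a \<in> U" using assms U_def by auto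
  define u where "u = Min U"
  have uU: "u \<in> U" using fU \<open>a\<in>U\<close> u_def Min_in by blast
  have umin: "\<forall>w\<in>U. u \<le> w" using fU u_def by simp
  define V where "V = {w\<in>KA \<union> KB. w < u}"
  have "s \<in> V" using uU assms V_def U_def by auto
  have fV: "finite V" using assms V_def by (auto intro: finite_subset)
  define v where "v = Max V"
  have vV: "v \<in> V" using fV \<open>s\<in>V\<close> v_def Max_in by blast
  have vmax: "\<forall>w\<in>V. w \<le> v" using fV v_def by simp
  have "s \<le> v" using vmax \<open>s\<in>V\<close> by auto
  have vnA: "v \<notin> KA"
  proof
    assume "v \<in> KA"
    show False
    proof (cases "s < v")
      case True
      then have "v \<in> U" using \<open>v \<in> KA\<close> uU vV U_def V_def by auto
      then show False using umin vV V_def by fastforce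
    next
      case False
      then show False using \<open>s \<le> v\<close> \<open>v \<in> KA\<close> assms by auto
    qed
  qed
  have "block_boundary KA KB u"
    unfolding block_boundary_def
  proof (intro conjI disjI1 ballI impI)
    show "u \<in> KA \<union> KB" using uU U_def by auto
    fix y assume y: "y \<in> KA \<union> KB" "y < u \<and> \<not> (\<exists>z\<in>KA \<union> KB. y < z \<and> z < u)"
    then have "y \<in> V" using V_def by auto
    then have "y \<le> v" using vmax by auto
    moreover have "\<not> y < v" using y vV V_def by auto
    ultimately have "y = v" by auto
    then show "(y \<in> KA) = (u \<notin> KA)" using vnA uU U_def by auto
  qed
  then show ?thesis using uU U_def by auto
qed

lemma bb_between:
  assumes "finite (KA \<union> KB)" "KA \<inter> KB = {}" "a \<in> KA" "s \<in> KB"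
  shows "\<exists>u\<in>KA. block_boundary KA KB u \<and> min a s \<le> u \<and> u \<le> max a s"
proof (cases "a < s")
  case True then show ?thesis using bb_lt[OF assms True] by fastforce
next
  case False
  then have sa: "s < a" using assms by (cases "s = a") auto
  show ?thesis using bb_gt[OF assms sa] sa by fastforce
qed

lemma tri:
  assumes "bst TQ" "top_part \<sigma>Q TQ" "set_tree \<sigma>Q = S \<inter> set_tree TQ"
    "S \<subseteq> set_tree TQ \<union> KR" "set_tree TQ \<inter> KR = {}" "finite KR"
    "{x. block_boundary (set_tree TQ) KR x} \<subseteq> S"
    "a \<in> set_tree TQ" "s \<in> S" "a \<noteq> s"
  shows "a \<in> S \<or> (\<exists>s'\<in>S. min a s < s' \<and> s' < max a s) \<or> anc TQ s a"
proof (rule ccontr)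
  assume H: "\<not> ?thesis"
  have sQ: "s \<in> set_tree TQ"
  proof (rule ccontr)
    assume "s \<notin> set_tree TQ"
    then have "s \<in> KR" using assms by auto
    then obtain u where u: "u \<in> set_tree TQ" "block_boundary (set_tree TQ) KR u" "min a s \<le> u" "u \<le> max a s"
      using bb_between[of "set_tree TQ" KR a s] assms by auto
    then have "u \<in> S" using assms by auto
    moreover have "u \<noteq> s" using u \<open>s \<in> KR\<close> assms by auto
    moreover have "u \<noteq> a" using H \<open>u \<in> S\<close> by auto
    ultimately show False using H u by (metis min_def max_def order_le_less)
  qed
  obtain w where w: "anc TQ w a" "anc TQ w s" "min a s \<le> w" "w \<le> max a s"
    using lca[OF assms(1) assms(8) sQ] by auto
  have "w \<in> set_tree \<sigma>Q" using top_closed[OF assms(2) assms(1) w(2)] sQ assms by auto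
  then have "w \<in> S" using assms by auto
  then have "w = s \<or> w = a" using H w by (metis min_def max_def order_le_less)
  then show False using H w \<open>w \<in> S\<close> by auto
qed



definition wit :: "(nat\<times>nat) set \<Rightarrow> nat\<times>nat \<Rightarrow> nat\<times>nat \<Rightarrow> bool" where
  "wit P x y \<longleftrightarrow> (\<exists>z\<in>P. z \<noteq> x \<and> z \<noteq> y \<and> min (fst x) (fst y) \<le> fst z \<and> fst z \<le> max (fst x) (fst y)
     \<and> min (snd x) (snd y) \<le> snd z \<and> snd z \<le> max (snd x) (snd y))"

lemma arb_wit: "arborally_satisfied P \<longleftrightarrow> (\<forall>x\<in>P. \<forall>y\<in>P. fst x \<noteq> fst y \<and> snd x \<noteq> snd y \<longrightarrow> wit P x y)"
  by (simp add: arborally_satisfied_def wit_def)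

lemma wit_sym: "wit P x y = wit P y x"
  unfolding wit_def by (auto simp: min.commute max.commute)

lemma wit_mono: "wit P x y \<Longrightarrow> P \<subseteq> Q \<Longrightarrow> wit Q x y"
  unfolding wit_def by blast

lemma witI: "(c,k) \<in> P \<Longrightarrow> (c,k) \<noteq> x \<Longrightarrow> (c,k) \<noteq> y \<Longrightarrow> min (fst x) (fst y) \<le> c \<Longrightarrow> c \<le> max (fst x) (fst y)
  \<Longrightarrow> min (snd x) (snd y) \<le> k \<Longrightarrow> k \<le> max (snd x) (snd y) \<Longrightarrow> wit P x y"
  unfolding wit_def by force

definition invL :: "(nat\<times>nat) set \<Rightarrow> nat \<Rightarrow> nat tree \<Rightarrow> bool" where
  "invL P f T \<longleftrightarrow> (\<forall>s a t. anc T s a \<and> s \<noteq> a \<and> (t,a) \<in> P \<longrightarrow> (f,s) \<in> P \<or>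
     (\<exists>z\<in>P. z \<noteq> (t,a) \<and> z \<noteq> (f,s) \<and> f \<le> fst z \<and> fst z \<le> t \<and> min a s \<le> snd z \<and> snd z \<le> max a s))"

definition invR :: "(nat\<times>nat) set \<Rightarrow> nat \<Rightarrow> nat tree \<Rightarrow> bool" where
  "invR P l T \<longleftrightarrow> (\<forall>s a t. anc T s a \<and> s \<noteq> a \<and> (t,a) \<in> P \<longrightarrow> (l,s) \<in> P \<or>
     (\<exists>z\<in>P. z \<noteq> (t,a) \<and> z \<noteq> (l,s) \<and> t \<le> fst z \<and> fst z \<le> l \<and> min a s \<le> snd z \<and> snd z \<le> max a s))"

lemma merge_step:
  fixes A B :: "(nat\<times>nat) set" and TA TB T \<sigma> \<sigma>A \<sigma>B :: "nat tree" and c1 c2 c3 :: nat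
  assumes bA: "bst TA" and bB: "bst TB" and bT: "bst T"
    and disj: "set_tree TA \<inter> set_tree TB = {}"
    and setT: "set_tree T = set_tree TA \<union> set_tree TB"
    and tp: "top_part \<sigma> T" and tpA: "top_part \<sigma>A TA" and tpB: "top_part \<sigma>B TB"
    and sets: "set_tree \<sigma> = set_tree \<sigma>A \<union> set_tree \<sigma>B"
    and hang: "\<forall>H\<in>hanging \<sigma> T. H \<noteq> Leaf \<longrightarrow> H \<in> hanging \<sigma>A TA \<union> hanging \<sigma>B TB"
    and bnd: "{x. block_boundary (set_tree TA) (set_tree TB) x} \<subseteq> set_tree \<sigma>"
    and c12: "c1 \<le> c2" and c23: "c2 < c3"
    and Ain: "\<forall>p\<in>A. c1 \<le> fst p \<and> fst p \<le> c2 \<and> snd p \<in> set_tree TA"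
    and Bin: "\<forall>p\<in>B. c2 < fst p \<and> fst p \<le> c3 \<and> snd p \<in> set_tree TB"
    and satA: "arborally_satisfied A" and satB: "arborally_satisfied B"
    and iLA: "invL A c1 TA" and iRA: "invR A c2 TA"
    and iLB: "invL B (Suc c2) TB" and iRB: "invR B c3 TB"
  defines "P \<equiv> A \<union> B \<union> {(c,s). c \<in> {c1,c2,c3} \<and> s \<in> set_tree \<sigma>}"
  shows "arborally_satisfied P \<and> invL P c1 T \<and> invR P c3 T"
proof -
  define S where "S = set_tree \<sigma>"
  define KA where "KA = set_tree TA"
  define KB where "KB = set_tree TB"
  have SA: "set_tree \<sigma>A \<subseteq> KA" using top_set[OF tpA] KA_def by auto
  have SB: "set_tree \<sigma>B \<subseteq> KB" using top_set[OF tpB] KB_def by auto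
  have SKA: "set_tree \<sigma>A = S \<inter> KA" using SA SB sets disj S_def KA_def KB_def by auto
  have SKB: "set_tree \<sigma>B = S \<inter> KB" using SA SB sets disj S_def KA_def KB_def by auto
  have SK: "S \<subseteq> KA \<union> KB" using SA SB sets S_def by auto
  have bndA: "{x. block_boundary KA KB x} \<subseteq> S" using bnd KA_def KB_def S_def by auto
  have bndB: "{x. block_boundary KB KA x} \<subseteq> S" using bndA bb_sym[of KA KB] disj KA_def KB_def by auto
  have triA: "a \<in> S \<or> (\<exists>s'\<in>S. min a s < s' \<and> s' < max a s) \<or> anc TA s a"
    if "a \<in> KA" "s \<in> S" "a \<noteq> s" for a s
    using tri[OF bA tpA, of S KB a s] SKA SK disj bndA that KA_def KB_def by auto
  have triB: "a \<in> S \<or> (\<exists>s'\<in>S. min a s < s' \<and> s' < max a s) \<or> anc TB s a"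
    if "a \<in> KB" "s \<in> S" "a \<noteq> s" for a s
    using tri[OF bB tpB, of S KA a s] SKB SK disj bndB that KA_def KB_def by auto
  have N: "(c,k) \<in> P" if "c \<in> {c1,c2,c3}" "k \<in> S" for c k
    using that P_def S_def by auto
  have AP: "A \<subseteq> P" and BP: "B \<subseteq> P" using P_def by auto
  have Pcases: "p \<in> A \<or> p \<in> B \<or> (fst p \<in> {c1,c2,c3} \<and> snd p \<in> S)" if "p \<in> P" for p
    using that P_def S_def by auto

  have mixed: "wit P (t,a) (c,s)"
    if xin: "(t,a) \<in> A \<union> B" and cc: "c \<in> {c1,c2,c3}" and sS: "s \<in> S" and yn: "(c,s) \<notin> A \<union> B"
      and tc: "t \<noteq> c" and as: "a \<noteq> s" for t a c s
  proof -
    consider "(t,a) \<in> A" | "(t,a) \<in> B" using xin by auto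
    then show ?thesis
    proof cases
      case 1
      then have tA: "c1 \<le> t" "t \<le> c2" "a \<in> KA" using Ain KA_def by auto
      consider "c = c3" | "c = c1 \<and> t = c2" | "c = c1 \<and> c1 < t \<and> t < c2" | "c = c2 \<and> t = c1" | "c = c2 \<and> c1 < t \<and> t < c2"
        using cc tc tA c23 by force
      then show ?thesis
      proof cases
        case 1 then show ?thesis using N[of c2 s] sS as tA c23 by (intro witI[of c2 s]) auto
      next
        case 2 then show ?thesis using N[of c2 s] sS as tA tc by (intro witI[of c2 s]) auto
      next
        case 3
        from triA[OF tA(3) sS as] consider "a \<in> S" | s' where "s' \<in> S" "min a s < s'" "s' < max a s" | "anc TA s a"
          by blast
        then show ?thesis
        proof cases
          case 1 then show ?thesis using N[of c1 a] 3 as by (intro witI[of c1 a]) auto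
        next
          case (2 s') then show ?thesis using N[of c1 s'] 3 as by (intro witI[of c1 s']) auto
        next
          case 4: 3
          from iLA 4 as \<open>(t,a) \<in> A\<close> have "(c1,s) \<in> A \<or> (\<exists>z\<in>A. z \<noteq> (t,a) \<and> z \<noteq> (c1,s) \<and> c1 \<le> fst z \<and> fst z \<le> t \<and> min a s \<le> snd z \<and> snd z \<le> max a s)"
            unfolding invL_def by blast
          then show ?thesis using yn 3 AP unfolding wit_def by fastforce
        qed
      next
        case 4 then show ?thesis using N[of c1 s] sS as tA tc by (intro witI[of c1 s]) auto
      next
        case 5
        from triA[OF tA(3) sS as] consider "a \<in> S" | s' where "s' \<in> S" "min a s < s'" "s' < max a s" | "anc TA s a"
          by blast
        then show ?thesis
        proof cases
          case 1 then show ?thesis using N[of c2 a] 5 as by (intro witI[of c2 a]) auto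
        next
          case (2 s') then show ?thesis using N[of c2 s'] 5 as by (intro witI[of c2 s']) auto
        next
          case 3
          from iRA 3 as \<open>(t,a) \<in> A\<close> have "(c2,s) \<in> A \<or> (\<exists>z\<in>A. z \<noteq> (t,a) \<and> z \<noteq> (c2,s) \<and> t \<le> fst z \<and> fst z \<le> c2 \<and> min a s \<le> snd z \<and> snd z \<le> max a s)"
            unfolding invR_def by blast
          then show ?thesis using yn 5 AP unfolding wit_def by fastforce
        qed
      qed
    next
      case 2
      then have tB: "c2 < t" "t \<le> c3" "a \<in> KB" using Bin KB_def by auto
      consider "c = c1 \<and> c1 < c2" | "c = c2" | "c = c3 \<and> t < c3"
        using cc tc tB c12 by force
      then show ?thesis
      proof cases
        case 1 then show ?thesis using N[of c2 s] sS as tB by (intro witI[of c2 s]) auto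
      next
        case 2
        from triB[OF tB(3) sS as] consider "a \<in> S" | s' where "s' \<in> S" "min a s < s'" "s' < max a s" | "anc TB s a"
          by blast
        then show ?thesis
        proof cases
          case 1 then show ?thesis using N[of c2 a] 2 as tB by (intro witI[of c2 a]) auto
        next
          case (2 s') then show ?thesis using N[of c2 s'] \<open>c = c2\<close> as tB by (intro witI[of c2 s']) auto
        next
          case 3
          from iLB 3 as \<open>(t,a) \<in> B\<close> have "(Suc c2,s) \<in> B \<or> (\<exists>z\<in>B. z \<noteq> (t,a) \<and> z \<noteq> (Suc c2,s) \<and> Suc c2 \<le> fst z \<and> fst z \<le> t \<and> min a s \<le> snd z \<and> snd z \<le> max a s)"
            unfolding invL_def by blast
          then show ?thesis
          proof
            assume "(Suc c2, s) \<in> B"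
            then show ?thesis using BP 2 as tB by (intro witI[of "Suc c2" s]) auto
          next
            assume "\<exists>z\<in>B. z \<noteq> (t,a) \<and> z \<noteq> (Suc c2,s) \<and> Suc c2 \<le> fst z \<and> fst z \<le> t \<and> min a s \<le> snd z \<and> snd z \<le> max a s"
            then obtain z where "z \<in> B" "z \<noteq> (t,a)" "Suc c2 \<le> fst z" "fst z \<le> t" "min a s \<le> snd z" "snd z \<le> max a s"
              by blast
            then show ?thesis using BP 2 tB unfolding wit_def by (intro bexI[of _ z]) auto
          qed
        qed
      next
        case 3
        from triB[OF tB(3) sS as] consider "a \<in> S" | s' where "s' \<in> S" "min a s < s'" "s' < max a s" | "anc TB s a"
          by blast
        then show ?thesis
        proof cases
          case 1 then show ?thesis using N[of c3 a] 3 as by (intro witI[of c3 a]) auto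
        next
          case (2 s') then show ?thesis using N[of c3 s'] 3 as by (intro witI[of c3 s']) auto
        next
          case 4: 3
          from iRB 4 as \<open>(t,a) \<in> B\<close> have "(c3,s) \<in> B \<or> (\<exists>z\<in>B. z \<noteq> (t,a) \<and> z \<noteq> (c3,s) \<and> t \<le> fst z \<and> fst z \<le> c3 \<and> min a s \<le> snd z \<and> snd z \<le> max a s)"
            unfolding invR_def by blast
          then show ?thesis using yn 3 BP unfolding wit_def by fastforce
        qed
      qed
    qed
  qed

  have AB: "wit P x y" if "x \<in> A" "y \<in> B" for x y
  proof -
    obtain t a where x: "x = (t,a)" by (cases x)
    obtain t' b where y: "y = (t',b)" by (cases y)
    have a: "a \<in> KA" "c1 \<le> t" "t \<le> c2" using that Ain x KA_def by auto
    have b: "b \<in> KB" "c2 < t'" using that Bin y KB_def by auto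
    obtain u where u: "u \<in> KA" "block_boundary KA KB u" "min a b \<le> u" "u \<le> max a b"
      using bb_between[of KA KB a b] a b disj KA_def KB_def by auto
    obtain v where v: "v \<in> KB" "block_boundary KB KA v" "min b a \<le> v" "v \<le> max b a"
      using bb_between[of KB KA b a] a b disj KA_def KB_def by (auto simp: Un_commute Int_commute)
    have uS: "u \<in> S" using u bndA by auto
    have vS: "v \<in> S" using v bndB by auto
    show ?thesis
    proof (cases "u = a")
      case False
      then show ?thesis using N[of c2 u] uS u a b x y by (intro witI[of c2 u]) auto
    next
      case True
      then have "v \<noteq> a" using disj v a KA_def KB_def by auto
      then show ?thesis using N[of c2 v] vS v a b x y by (intro witI[of c2 v]) (auto simp: min.commute max.commute)
    qed
  qed

  have sat: "arborally_satisfied P"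
    unfolding arb_wit
  proof (intro ballI impI)
    fix x y assume xP: "x \<in> P" and yP: "y \<in> P" and na: "fst x \<noteq> fst y \<and> snd x \<noteq> snd y"
    show "wit P x y"
    proof (cases "x \<in> A \<union> B \<and> y \<in> A \<union> B")
      case True
      then consider "x \<in> A" "y \<in> A" | "x \<in> B" "y \<in> B" | "x \<in> A" "y \<in> B" | "x \<in> B" "y \<in> A" by blast
      then show ?thesis
      proof cases
        case 1 then show ?thesis using satA na AP wit_mono unfolding arb_wit by blast
      next
        case 2 then show ?thesis using satB na BP wit_mono unfolding arb_wit by blast
      next
        case 3 then show ?thesis using AB by blast
      next
        case 4 then show ?thesis using AB wit_sym by blast
      qed
    next
      case False
      note F = False
      show ?thesis
      proof (cases "x \<in> A \<union> B")
        case True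
        then have "y \<notin> A \<union> B" using F by auto
        then have "fst y \<in> {c1,c2,c3} \<and> snd y \<in> S" using Pcases[OF yP] by auto
        then show ?thesis using mixed[of "fst x" "snd x" "fst y" "snd y"] True \<open>y \<notin> A \<union> B\<close> na by auto
      next
        case xn: False
        then have xN: "fst x \<in> {c1,c2,c3} \<and> snd x \<in> S" using Pcases[OF xP] by auto
        show ?thesis
        proof (cases "y \<in> A \<union> B")
          case True
          then show ?thesis using mixed[of "fst y" "snd y" "fst x" "snd x"] xN xn na wit_sym by auto
        next
          case False
          then have "fst y \<in> {c1,c2,c3} \<and> snd y \<in> S" using Pcases[OF yP] by auto
          then show ?thesis using N[of "fst x" "snd y"] xN na by (intro witI[of "fst x" "snd y"]) (auto simp: prod_eq_iff)
        qed
      qed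
    qed
  qed

  have ancAB: "anc TA s a \<or> anc TB s a" if h1: "anc T s a" and h2: "s \<notin> S" for s a
  proof -
    obtain H where "H \<in> hanging \<sigma> T" "anc H s a" using hang_anc[OF tp] h1 h2 S_def by blast
    moreover then have "H \<noteq> Leaf" by auto
    ultimately have "H \<in> hanging \<sigma>A TA \<or> H \<in> hanging \<sigma>B TB" using hang by auto
    then show ?thesis using hang_sub[OF tpA] hang_sub[OF tpB] \<open>anc H s a\<close> by blast
  qed

  have iL: "invL P c1 T"
    unfolding invL_def
  proof (intro allI impI)
    fix s a t assume H: "anc T s a \<and> s \<noteq> a \<and> (t, a) \<in> P"
    show "(c1, s) \<in> P \<or> (\<exists>z\<in>P. z \<noteq> (t, a) \<and> z \<noteq> (c1, s) \<and> c1 \<le> fst z \<and> fst z \<le> t \<and> min a s \<le> snd z \<and> snd z \<le> max a s)"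
    proof (cases "s \<in> S")
      case True then show ?thesis using N by auto
    next
      case False
      have aS: "a \<notin> S" using top_closed[OF tp bT, of s a] H False S_def by auto
      then have "(t,a) \<in> A \<or> (t,a) \<in> B" using Pcases H by fastforce
      moreover have "anc TA s a \<or> anc TB s a" using ancAB H False by auto
      ultimately consider "(t,a) \<in> A" "anc TA s a" | "(t,a) \<in> B" "anc TB s a"
        using anc_set Ain Bin disj by fastforce
      then show ?thesis
      proof cases
        case 1
        then have "(c1, s) \<in> A \<or> (\<exists>z\<in>A. z \<noteq> (t, a) \<and> z \<noteq> (c1, s) \<and> c1 \<le> fst z \<and> fst z \<le> t \<and> min a s \<le> snd z \<and> snd z \<le> max a s)"
          using iLA H unfolding invL_def by blast
        then show ?thesis using AP by blast
      next
        case 2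
        then have "(Suc c2, s) \<in> B \<or> (\<exists>z\<in>B. z \<noteq> (t, a) \<and> z \<noteq> (Suc c2, s) \<and> Suc c2 \<le> fst z \<and> fst z \<le> t \<and> min a s \<le> snd z \<and> snd z \<le> max a s)"
          using iLB H unfolding invL_def by blast
        moreover have "c2 < t" using 2 Bin by auto
        ultimately show ?thesis using BP H c12 by fastforce
      qed
    qed
  qed

  have iR: "invR P c3 T"
    unfolding invR_def
  proof (intro allI impI)
    fix s a t assume H: "anc T s a \<and> s \<noteq> a \<and> (t, a) \<in> P"
    show "(c3, s) \<in> P \<or> (\<exists>z\<in>P. z \<noteq> (t, a) \<and> z \<noteq> (c3, s) \<and> t \<le> fst z \<and> fst z \<le> c3 \<and> min a s \<le> snd z \<and> snd z \<le> max a s)"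
    proof (cases "s \<in> S")
      case True then show ?thesis using N by auto
    next
      case False
      have aS: "a \<notin> S" using top_closed[OF tp bT, of s a] H False S_def by auto
      then have "(t,a) \<in> A \<or> (t,a) \<in> B" using Pcases H by fastforce
      moreover have "anc TA s a \<or> anc TB s a" using ancAB H False by auto
      ultimately consider "(t,a) \<in> A" "anc TA s a" | "(t,a) \<in> B" "anc TB s a"
        using anc_set Ain Bin disj by fastforce
      then show ?thesis
      proof cases
        case 1
        then have "(c2, s) \<in> A \<or> (\<exists>z\<in>A. z \<noteq> (t, a) \<and> z \<noteq> (c2, s) \<and> t \<le> fst z \<and> fst z \<le> c2 \<and> min a s \<le> snd z \<and> snd z \<le> max a s)"
          using iRA H unfolding invR_def by blast
        moreover have "t \<le> c2" using 1 Ain by auto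
        ultimately show ?thesis using AP H c23 by fastforce
      next
        case 2
        then have "(c3, s) \<in> B \<or> (\<exists>z\<in>B. z \<noteq> (t, a) \<and> z \<noteq> (c3, s) \<and> t \<le> fst z \<and> fst z \<le> c3 \<and> min a s \<le> snd z \<and> snd z \<le> max a s)"
          using iRB H unfolding invR_def by blast
        then show ?thesis using BP by blast
      qed
    qed
  qed
  show ?thesis using sat iL iR by blast
qed



declare bst_msort.simps[simp del] arb_msort.simps[simp del]

lemma merge_props:
  assumes "is_bst_merge M" "bst TA" "bst TB" "TA \<noteq> Leaf" "TB \<noteq> Leaf" "set_tree TA \<inter> set_tree TB = {}"
  shows "bst (fst (M TA TB)) \<and> set_tree (fst (M TA TB)) = set_tree TA \<union> set_tree TB
    \<and> top_part (snd (M TA TB)) (fst (M TA TB))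
    \<and> (\<exists>ta tb. top_part ta TA \<and> top_part tb TB \<and> set_tree (snd (M TA TB)) = set_tree ta \<union> set_tree tb
        \<and> (\<forall>H\<in>hanging (snd (M TA TB)) (fst (M TA TB)). H \<noteq> Leaf \<longrightarrow> H \<in> hanging ta TA \<union> hanging tb TB))
    \<and> {x. block_boundary (set_tree TA) (set_tree TB) x} \<subseteq> set_tree (snd (M TA TB))"
proof -
  have "bst TA \<and> bst TB \<and> TA \<noteq> Leaf \<and> TB \<noteq> Leaf \<and> set_tree TA \<inter> set_tree TB = {}" using assms by blast
  then have H: "let T = fst (M TA TB); tau = snd (M TA TB) in
         bst T \<and> set_tree T = set_tree TA \<union> set_tree TB \<and> top_tree tau T \<and>
         (\<exists>ta tb. top_tree ta TA \<and> top_tree tb TB \<and>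
            set_tree tau = set_tree ta \<union> set_tree tb \<and>
            (\<forall>t\<in>hanging tau T. t \<noteq> Leaf \<longrightarrow> t \<in> hanging ta TA \<union> hanging tb TB)) \<and>
         {x. block_boundary (set_tree TA) (set_tree TB) x} \<subseteq> set_tree tau"
    using assms(1) unfolding is_bst_merge_def by blast
  show ?thesis using H unfolding Let_def top_tree_def by meson
qed

lemma bst_ok: "is_bst_merge M \<Longrightarrow> distinct xs \<Longrightarrow> xs \<noteq> [] \<Longrightarrow>
  bst (bst_msort sp M xs) \<and> set_tree (bst_msort sp M xs) = set xs"
proof (induction xs rule: measure_induct_rule[where f=length])
  case (less xs)
  show ?case
  proof (cases "length xs = 1")
    case True
    then obtain x where "xs = [x]" by (cases xs) auto
    then show ?thesis by (simp add: bst_msort.simps)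
  next
    case False
    then have L: "2 \<le> length xs" using less.prems by (cases xs) (auto simp: Suc_le_eq)
    define k where "k = split_pt sp xs"
    have k: "0 < k" "k < length xs" using split_pt_bounds[OF L] k_def by auto
    have eq: "bst_msort sp M xs = fst (M (bst_msort sp M (take k xs)) (bst_msort sp M (drop k xs)))"
      using L k_def by (subst bst_msort.simps) auto
    have d1: "distinct (take k xs)" "distinct (drop k xs)" using less.prems by auto
    have n1: "take k xs \<noteq> []" "drop k xs \<noteq> []" using k by auto
    have IH1: "bst (bst_msort sp M (take k xs)) \<and> set_tree (bst_msort sp M (take k xs)) = set (take k xs)"
      using less.IH[of "take k xs"] k d1 n1 less.prems by auto
    have IH2: "bst (bst_msort sp M (drop k xs)) \<and> set_tree (bst_msort sp M (drop k xs)) = set (drop k xs)"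
      using less.IH[of "drop k xs"] k d1 n1 less.prems by auto
    have dj: "set (take k xs) \<inter> set (drop k xs) = {}"
      using set_take_disj_set_drop_if_distinct[OF less.prems(2) order_refl] by simp
    have un: "set (take k xs) \<union> set (drop k xs) = set xs"
      by (metis append_take_drop_id set_append)
    have ne: "bst_msort sp M (take k xs) \<noteq> Leaf" "bst_msort sp M (drop k xs) \<noteq> Leaf"
      using IH1 IH2 n1 by auto
    have dj': "set_tree (bst_msort sp M (take k xs)) \<inter> set_tree (bst_msort sp M (drop k xs)) = {}"
      using IH1 IH2 dj by simp
    note mp = merge_props[OF less.prems(1) conjunct1[OF IH1] conjunct1[OF IH2] ne dj']
    have "bst (bst_msort sp M xs)" using conjunct1[OF mp] eq by simp
    moreover have "set_tree (bst_msort sp M xs) = set xs"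
      using conjunct1[OF conjunct2[OF mp]] eq IH1 IH2 un by simp
    ultimately show ?thesis by blast
  qed
qed

lemma arb_nonempty: "xs \<noteq> [] \<Longrightarrow> arb_msort sp M t0 xs \<noteq> {}"
proof (induction xs arbitrary: t0 rule: measure_induct_rule[where f=length])
  case (less xs)
  show ?case
  proof (cases "length xs = 1")
    case True then show ?thesis by (subst arb_msort.simps) auto
  next
    case False
    then have L: "2 \<le> length xs" using less.prems by (cases xs) (auto simp: Suc_le_eq)
    define k where "k = split_pt sp xs"
    have k: "0 < k" "k < length xs" using split_pt_bounds[OF L] k_def by auto
    have "arb_msort sp M t0 (take k xs) \<noteq> {}" using less.IH[of "take k xs"] k less.prems by auto
    moreover have "arb_msort sp M (t0 + k) (drop k xs) \<noteq> {}" using less.IH[of "drop k xs"] k less.prems by auto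
    ultimately show ?thesis using L k_def by (subst arb_msort.simps) (auto simp: Let_def)
  qed
qed

lemma main:
  assumes "is_bst_merge M" "distinct xs" "xs \<noteq> []"
  shows "(\<forall>p\<in>arb_msort sp M t0 xs. t0 \<le> fst p \<and> fst p < t0 + length xs \<and> snd p \<in> set xs)
    \<and> (\<forall>i<length xs. (t0+i, xs!i) \<in> arb_msort sp M t0 xs)
    \<and> arborally_satisfied (arb_msort sp M t0 xs)
    \<and> invL (arb_msort sp M t0 xs) t0 (bst_msort sp M xs)
    \<and> invR (arb_msort sp M t0 xs) (t0 + length xs - 1) (bst_msort sp M xs)"
  using assms
proof (induction xs arbitrary: t0 rule: measure_induct_rule[where f=length])
  case (less xs)
  show ?case
  proof (cases "length xs = 1")
    case True
    then obtain x where x: "xs = [x]" by (cases xs) auto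
    have e1: "arb_msort sp M t0 xs = {(t0,x)}" using x by (subst arb_msort.simps) auto
    have e2: "bst_msort sp M xs = Node Leaf x Leaf" using x by (subst bst_msort.simps) simp
    show ?thesis unfolding e1 e2 using x
      by (auto simp: arborally_satisfied_def invL_def invR_def)
  next
    case False
    then have L: "2 \<le> length xs" using less.prems by (cases xs) (auto simp: Suc_le_eq)
    define k where "k = split_pt sp xs"
    have k: "0 < k" "k < length xs" using split_pt_bounds[OF L] k_def by auto
    define ys where "ys = take k xs"
    define zs where "zs = drop k xs"
    define A where "A = arb_msort sp M t0 ys"
    define B where "B = arb_msort sp M (t0 + k) zs"
    define TA where "TA = bst_msort sp M ys"
    define TB where "TB = bst_msort sp M zs"
    have lys: "length ys = k" and lzs: "length zs = length xs - k" using k ys_def zs_def by auto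
    have d1: "distinct ys" "distinct zs" using less.prems ys_def zs_def by auto
    have n1: "ys \<noteq> []" "zs \<noteq> []" using k ys_def zs_def by auto
    have dj: "set ys \<inter> set zs = {}"
      using set_take_disj_set_drop_if_distinct[OF less.prems(2) order_refl] ys_def zs_def by simp
    have un: "set ys \<union> set zs = set xs" unfolding ys_def zs_def
      by (metis append_take_drop_id set_append)
    have IHA: "(\<forall>p\<in>A. t0 \<le> fst p \<and> fst p < t0 + k \<and> snd p \<in> set ys)
      \<and> (\<forall>i<k. (t0+i, ys!i) \<in> A) \<and> arborally_satisfied A \<and> invL A t0 TA \<and> invR A (t0 + k - 1) TA"
      using less.IH[of ys t0] k lys d1 n1 less.prems A_def TA_def by auto
    have IHB: "(\<forall>p\<in>B. t0 + k \<le> fst p \<and> fst p < t0 + k + (length xs - k) \<and> snd p \<in> set zs)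
      \<and> (\<forall>i<length xs - k. (t0 + k + i, zs!i) \<in> B) \<and> arborally_satisfied B \<and> invL B (t0 + k) TB
      \<and> invR B (t0 + k + (length xs - k) - 1) TB"
      using less.IH[of zs "t0 + k"] k lzs d1 n1 less.prems B_def TB_def by auto
    have bA: "bst TA \<and> set_tree TA = set ys" using bst_ok[OF less.prems(1) d1(1) n1(1)] TA_def by auto
    have bB: "bst TB \<and> set_tree TB = set zs" using bst_ok[OF less.prems(1) d1(2) n1(2)] TB_def by auto
    have nA: "A \<noteq> {}" using arb_nonempty n1 A_def by auto
    have nB: "B \<noteq> {}" using arb_nonempty n1 B_def by auto
    define T where "T = fst (M TA TB)"
    define \<sigma> where "\<sigma> = snd (M TA TB)"
    have eT: "bst_msort sp M xs = T"
      using L k_def T_def TA_def TB_def ys_def zs_def by (subst bst_msort.simps) auto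
    have eP: "arb_msort sp M t0 xs = A \<union> B \<union> {(c, s). c \<in> {t0, t0 + k - 1, t0 + length xs - 1} \<and> s \<in> set_tree \<sigma>}"
      using L nA nB less.prems(3) False unfolding A_def B_def \<sigma>_def TA_def TB_def ys_def zs_def k_def
      by (subst arb_msort.simps) (simp add: Let_def)
    have TAn: "TA \<noteq> Leaf" "TB \<noteq> Leaf" using bA bB n1 by auto
    have dj': "set_tree TA \<inter> set_tree TB = {}" using bA bB dj by auto
    obtain ta tb where mp: "bst T" "set_tree T = set_tree TA \<union> set_tree TB" "top_part \<sigma> T"
      "top_part ta TA" "top_part tb TB" "set_tree \<sigma> = set_tree ta \<union> set_tree tb"
      "\<forall>H\<in>hanging \<sigma> T. H \<noteq> Leaf \<longrightarrow> H \<in> hanging ta TA \<union> hanging tb TB"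
      "{x. block_boundary (set_tree TA) (set_tree TB) x} \<subseteq> set_tree \<sigma>"
      using merge_props[OF less.prems(1) conjunct1[OF bA] conjunct1[OF bB] TAn dj'] T_def \<sigma>_def by blast
    have c2: "Suc (t0 + k - 1) = t0 + k" using k by auto
    have c3: "t0 + k + (length xs - k) - 1 = t0 + length xs - 1" using k by auto
    have ms: "arborally_satisfied (arb_msort sp M t0 xs) \<and> invL (arb_msort sp M t0 xs) t0 T
       \<and> invR (arb_msort sp M t0 xs) (t0 + length xs - 1) T"
      unfolding eP
    proof (rule merge_step[OF conjunct1[OF bA] conjunct1[OF bB] mp(1) dj' mp(2) mp(3) mp(4) mp(5) mp(6) mp(7) mp(8)])
      show "t0 \<le> t0 + k - 1" "t0 + k - 1 < t0 + length xs - 1" using k by auto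
      show "\<forall>p\<in>A. t0 \<le> fst p \<and> fst p \<le> t0 + k - 1 \<and> snd p \<in> set_tree TA" using IHA bA by fastforce
      show "\<forall>p\<in>B. t0 + k - 1 < fst p \<and> fst p \<le> t0 + length xs - 1 \<and> snd p \<in> set_tree TB" using IHB bB k by fastforce
      show "arborally_satisfied A" "invL A t0 TA" "invR A (t0 + k - 1) TA"
        using IHA by auto
      show "arborally_satisfied B" using IHB by auto
      show "invL B (Suc (t0 + k - 1)) TB" "invR B (t0 + length xs - 1) TB" using IHB c2 c3 by auto
    qed
    have p1: "\<forall>p\<in>arb_msort sp M t0 xs. t0 \<le> fst p \<and> fst p < t0 + length xs \<and> snd p \<in> set xs"
    proof
      fix p assume "p \<in> arb_msort sp M t0 xs"
      then consider "p \<in> A" | "p \<in> B" | "fst p \<in> {t0, t0 + k - 1, t0 + length xs - 1}" "snd p \<in> set_tree \<sigma>"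
        unfolding eP by auto
      then show "t0 \<le> fst p \<and> fst p < t0 + length xs \<and> snd p \<in> set xs"
      proof cases
        case 1 then show ?thesis using IHA un k by auto
      next
        case 2 then show ?thesis using IHB un k by auto
      next
        case 3
        have "set_tree \<sigma> \<subseteq> set_tree T" using top_set[OF mp(3)] .
        then show ?thesis using 3 mp(2) bA bB un k by auto
      qed
    qed
    have p2: "\<forall>i<length xs. (t0+i, xs!i) \<in> arb_msort sp M t0 xs"
    proof (intro allI impI)
      fix i assume i: "i < length xs"
      show "(t0+i, xs!i) \<in> arb_msort sp M t0 xs"
      proof (cases "i < k")
        case True
        then have "(t0+i, ys!i) \<in> A" using IHA by auto
        then show ?thesis unfolding eP using True ys_def by auto
      next
        case False
        have ik: "i - k < length xs - k" using False i by simp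
        have "(t0 + k + (i - k), zs!(i-k)) \<in> B" using IHB ik by blast
        moreover have "t0 + k + (i - k) = t0 + i" using False by simp
        ultimately have "(t0 + i, zs!(i-k)) \<in> B" by simp
        then show ?thesis unfolding eP using False zs_def i k by auto
      qed
    qed
    show ?thesis using p1 p2 ms eT by simp
  qed
qed


theorem lemma1:
  fixes M :: "nat tree \<Rightarrow> nat tree \<Rightarrow> nat tree \<times> nat tree"
    and sp :: "nat list \<Rightarrow> nat"
    and \<pi> :: "nat list"
  assumes "is_bst_merge M"
    and "distinct \<pi>" and "set \<pi> = {1..length \<pi>}"
  shows "arborally_satisfied (arb_msort sp M 1 \<pi>)
       \<and> {(i + 1, \<pi> ! i) | i. i < length \<pi>} \<subseteq> arb_msort sp M 1 \<pi>"
proof (cases "\<pi> = []")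
  case True
  have "arb_msort sp M 1 \<pi> = {}" using True by (subst arb_msort.simps) simp
  then show ?thesis using True by (simp add: arborally_satisfied_def)
next
  case False
  note m = main[OF assms(1) assms(2) False, of sp 1]
  have "\<forall>i<length \<pi>. (1+i, \<pi>!i) \<in> arb_msort sp M 1 \<pi>" using m by blast
  then have "{(i + 1, \<pi> ! i) | i. i < length \<pi>} \<subseteq> arb_msort sp M 1 \<pi>"
    by (auto simp: add.commute)
  then show ?thesis using m by blast
qed

end
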